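(* Let $f:\mathbb{R}^n\to\overline{\mathbb{R}}$ be a proper closed convex function with conjugate $f^*$, and let $K=\{(x,r)\in\mathbb{R}^n\times\mathbb{R} : x=0,\ r\ge 0\}$. A subset $F\subseteq\operatorname{epi} f$ is a $K$-minimal exposed face of $\operatorname{epi} f$ if and only if there is some $\bar u\in\operatorname{dom} f^*$ with $\partial f^*(\bar u)\neq\emptyset$ such that $$F=\{(x,f(x))\in\mathbb{R}^n\times\mathbb{R} : \bar u\in\partial f(x)\}.$$ Moreover, a subset $F^*\subseteq\operatorname{epi} f^*$ is a $K$-minimal exposed face of $\operatorname{epi} f^*$ if and only if there is some $\bar x\in\operatorname{dom} f$ with $\partial f(\bar x)\neq\emptyset$ such that $$F^*=\{(u,f^*(u))\in\mathbb{R}^n\times\mathbb{R} : u\in\partial f(\bar x)\}.$$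
   Context: $\overline{\mathbb{R}}=\mathbb{R}\cup\{\pm\infty\}$; $f^*(u)=\sup_x(\langle x,u\rangle-f(x))$. An exposed face of a convex set $A\subseteq\mathbb{R}^{n+1}$ is a set of the form $A\cap H$ where $H$ is a supporting hyperplane to $A$ (i.e. $A\cap H\neq\emptyset$ and $A$ lies in one closed half-space bounded by $H$). A point $p\in A$ is minimal with respect to $K$ if $(\{p\}-K\setminus(-K))\cap A=\emptyset$; a face is $K$-minimal if all its points are minimal with respect to $K$. *)

theory Defs
  imports "HOL-Analysis.Analysis"
begin

text \<open>Extended-real-valued functions on a Euclidean space 'a (playing the role of R^n).
  Points of R^n x R are pairs of type 'a \<times> real.\<close>

definition epi :: "('a \<Rightarrow> ereal) \<Rightarrow> ('a \<times> real) set" where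
  "epi f = {(x, r). f x \<le> ereal r}"

definition edom :: "('a \<Rightarrow> ereal) \<Rightarrow> 'a set" where
  "edom f = {x. f x < \<infinity>}"

definition proper_fun :: "('a \<Rightarrow> ereal) \<Rightarrow> bool" where
  "proper_fun f \<longleftrightarrow> (\<forall>x. f x \<noteq> -\<infinity>) \<and> (\<exists>x. f x < \<infinity>)"

definition convex_fun :: "('a::real_vector \<Rightarrow> ereal) \<Rightarrow> bool" where
  "convex_fun f \<longleftrightarrow> convex (epi f)"

definition closed_fun :: "('a::topological_space \<Rightarrow> ereal) \<Rightarrow> bool" where
  "closed_fun f \<longleftrightarrow> closed (epi f)"

definition conj_fun :: "('a::real_inner \<Rightarrow> ereal) \<Rightarrow> 'a \<Rightarrow> ereal" where
  "conj_fun f u = (SUP x. ereal (x \<bullet> u) - f x)"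

definition subdiff :: "('a::real_inner \<Rightarrow> ereal) \<Rightarrow> 'a \<Rightarrow> 'a set" where
  "subdiff f x = {u. \<bar>f x\<bar> \<noteq> \<infinity> \<and> (\<forall>y. f x + ereal ((y - x) \<bullet> u) \<le> f y)}"

definition exposed_face :: "'b::real_inner set \<Rightarrow> 'b set \<Rightarrow> bool" where
  "exposed_face F A \<longleftrightarrow> (\<exists>a b. a \<noteq> 0 \<and> A \<inter> {p. a \<bullet> p = b} \<noteq> {} \<and>
       A \<subseteq> {p. a \<bullet> p \<le> b} \<and> F = A \<inter> {p. a \<bullet> p = b})"

definition minimal_wrt :: "'b::ab_group_add set \<Rightarrow> 'b set \<Rightarrow> 'b \<Rightarrow> bool" where
  "minimal_wrt K A p \<longleftrightarrow> ((\<lambda>k. p - k) ` (K - uminus ` K)) \<inter> A = {}"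

definition minimal_face :: "'b::ab_group_add set \<Rightarrow> 'b set \<Rightarrow> 'b set \<Rightarrow> bool" where
  "minimal_face K A F \<longleftrightarrow> (\<forall>p\<in>F. minimal_wrt K A p)"

definition Kvert :: "('a::real_vector \<times> real) set" where
  "Kvert = {(x, r). x = 0 \<and> r \<ge> 0}"

end

theory Submission
  imports Defs
begin

lemma conj_ge: "ereal (x \<bullet> u) - f x \<le> conj_fun f u"
  unfolding conj_fun_def by (rule SUP_upper) auto

lemma conj_le: "(\<And>x. ereal (x \<bullet> u) - f x \<le> c) \<Longrightarrow> conj_fun f u \<le> c"
  unfolding conj_fun_def by (rule SUP_least) auto

lemma sub_char:
  assumes nm: "\<And>x. f x \<noteq> -\<infinity>"
  shows "u \<in> subdiff f x \<longleftrightarrow> \<bar>f x\<bar> \<noteq> \<infinity> \<and> conj_fun f u = ereal (x \<bullet> u - real_of_ereal (f x))"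
proof
  assume u: "u \<in> subdiff f x"
  then have fin: "\<bar>f x\<bar> \<noteq> \<infinity>" and le: "\<And>y. f x + ereal ((y - x) \<bullet> u) \<le> f y"
    unfolding subdiff_def by auto
  obtain r where r: "f x = ereal r" using fin by (cases "f x") auto
  have "conj_fun f u \<le> ereal (x \<bullet> u - r)"
  proof (rule conj_le)
    fix y
    show "ereal (y \<bullet> u) - f y \<le> ereal (x \<bullet> u - r)"
    proof (cases "f y")
      case (real s)
      with le[of y] r show ?thesis by (simp add: inner_diff_left)
    next
      case PInf then show ?thesis by simp
    next
      case MInf then show ?thesis using nm by simp
    qed
  qed
  moreover have "ereal (x \<bullet> u - r) \<le> conj_fun f u" using conj_ge[of x u f] r by simp
  ultimately show "\<bar>f x\<bar> \<noteq> \<infinity> \<and> conj_fun f u = ereal (x \<bullet> u - real_of_ereal (f x))"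
    using fin r by simp
next
  assume h: "\<bar>f x\<bar> \<noteq> \<infinity> \<and> conj_fun f u = ereal (x \<bullet> u - real_of_ereal (f x))"
  then obtain r where r: "f x = ereal r" by (cases "f x") auto
  have "f x + ereal ((y - x) \<bullet> u) \<le> f y" for y
  proof (cases "f y")
    case (real s)
    have "ereal (y \<bullet> u) - f y \<le> ereal (x \<bullet> u - r)" using conj_ge[of y u f] h r by simp
    with real r show ?thesis by (simp add: inner_diff_left)
  next
    case PInf then show ?thesis by simp
  next
    case MInf then show ?thesis using nm by simp
  qed
  with h show "u \<in> subdiff f x" unfolding subdiff_def by auto
qed

lemma conj_nm:
  assumes "proper_fun f" shows "conj_fun f u \<noteq> -\<infinity>"
proof -
  obtain x where x: "f x < \<infinity>" "f x \<noteq> -\<infinity>" using assms unfolding proper_fun_def by auto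
  then obtain r where r: "f x = ereal r" by (cases "f x") auto
  have "ereal (x \<bullet> u - r) \<le> conj_fun f u" using conj_ge[of x u f] r by simp
  then show ?thesis by auto
qed


lemma not_min:
  assumes "(y, r) \<in> epi g" "s > 0" "(y, r + s) \<in> F"
  shows "\<not> minimal_face Kvert (epi g) F"
proof -
  have "(0::'a, s) \<in> Kvert - uminus ` Kvert"
    using assms(2) unfolding Kvert_def by (auto simp: image_iff)
  then have "(y, r) \<in> (\<lambda>k. (y, r + s) - k) ` (Kvert - uminus ` Kvert)"
    by (auto simp: image_iff intro!: bexI[of _ "(0, s)"])
  then show ?thesis using assms unfolding minimal_face_def minimal_wrt_def by blast
qed

lemma face_char:
  fixes g :: "'a::real_inner \<Rightarrow> ereal"
  assumes nm: "\<And>x. g x \<noteq> -\<infinity>" and Fs: "F \<subseteq> epi g"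
  shows "(exposed_face F (epi g) \<and> minimal_face Kvert (epi g) F) \<longleftrightarrow>
   (\<exists>u b. (\<exists>x. \<bar>g x\<bar> \<noteq> \<infinity> \<and> x \<bullet> u - real_of_ereal (g x) = b) \<and>
     (\<forall>x. \<bar>g x\<bar> \<noteq> \<infinity> \<longrightarrow> x \<bullet> u - real_of_ereal (g x) \<le> b) \<and>
     F = {(x, real_of_ereal (g x)) | x. \<bar>g x\<bar> \<noteq> \<infinity> \<and> x \<bullet> u - real_of_ereal (g x) = b})"
  (is "?L \<longleftrightarrow> ?R")
proof
  assume L: ?L
  then obtain nv c where a0: "nv \<noteq> 0" and ne: "epi g \<inter> {p. nv \<bullet> p = c} \<noteq> {}"
    and sub: "epi g \<subseteq> {p. nv \<bullet> p \<le> c}" and Feq: "F = epi g \<inter> {p. nv \<bullet> p = c}"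
    unfolding exposed_face_def by blast
  obtain a t where nv: "nv = (a, t)" by (cases nv)
  from ne Feq obtain y0 r0 where p0: "(y0, r0) \<in> F" by auto
  have ep: "(y, r') \<in> epi g" if "(y, r) \<in> epi g" "r \<le> r'" for y r r'
    using that unfolding epi_def by (auto intro: order_trans)
  have "(y0, r0 + 1) \<in> epi g" using ep[of y0 r0] p0 Fs by auto
  with sub have "a \<bullet> y0 + t * (r0 + 1) \<le> c" using nv by auto
  moreover have "a \<bullet> y0 + t * r0 = c" using p0 Feq nv by auto
  ultimately have t0: "t \<le> 0" by (simp add: algebra_simps)
  have tn: "t \<noteq> 0"
  proof
    assume t: "t = 0"
    have "(y0, r0 + 1) \<in> F" using ep[of y0 r0 "r0+1"] p0 Fs Feq nv t by auto
    then have "\<not> minimal_face Kvert (epi g) F" using not_min[of y0 r0 g 1 F] p0 Fs by auto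
    with L show False by blast
  qed
  with t0 have tl: "t < 0" by simp
  define u where "u = (- 1 / t) *\<^sub>R a"
  define b where "b = - c / t"
  have e: "y \<bullet> u - r = (a \<bullet> y + t * r) / (-t)" for y r
    using tl unfolding u_def by (simp add: field_simps inner_commute)
  have eb: "b = c / (-t)" unfolding b_def by simp
  have key: "a \<bullet> y + t * r = c \<longleftrightarrow> y \<bullet> u - r = b" for y r
    using tl unfolding e eb by (simp add: divide_cancel_right)
  have key2: "a \<bullet> y + t * r \<le> c \<longleftrightarrow> y \<bullet> u - r \<le> b" for y r
    using tl unfolding e eb by (simp add: divide_le_cancel)
  have Fchar: "(y, r) \<in> F \<longleftrightarrow> g y \<le> ereal r \<and> y \<bullet> u - r = b" for y r
    using Feq nv key unfolding epi_def by auto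
  have epi_le: "g y \<le> ereal r \<Longrightarrow> y \<bullet> u - r \<le> b" for y r
  proof -
    assume "g y \<le> ereal r"
    then have "(y, r) \<in> epi g" unfolding epi_def by simp
    with sub nv have "a \<bullet> y + t * r \<le> c" by auto
    with key2 show ?thesis by blast
  qed
  have fin_of: "g y \<le> ereal r \<Longrightarrow> \<bar>g y\<bar> \<noteq> \<infinity>" for y r
    using nm[of y] by auto
  have Fpt: "r = real_of_ereal (g y) \<and> \<bar>g y\<bar> \<noteq> \<infinity>" if "(y, r) \<in> F" for y r
  proof -
    have gy: "g y \<le> ereal r" using that Fchar by auto
    then have fin: "\<bar>g y\<bar> \<noteq> \<infinity>" by (rule fin_of)
    have "real_of_ereal (g y) \<le> r" using gy fin by (cases "g y") auto
    moreover have "\<not> real_of_ereal (g y) < r"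
    proof
      assume lt: "real_of_ereal (g y) < r"
      have "(y, real_of_ereal (g y)) \<in> epi g" using fin unfolding epi_def by (cases "g y") auto
      moreover have "(y, real_of_ereal (g y) + (r - real_of_ereal (g y))) \<in> F" using that by simp
      ultimately have "\<not> minimal_face Kvert (epi g) F" using not_min lt by (metis diff_gt_0_iff_gt)
      with L show False by blast
    qed
    ultimately show ?thesis using fin by simp
  qed
  have allle: "\<forall>x. \<bar>g x\<bar> \<noteq> \<infinity> \<longrightarrow> x \<bullet> u - real_of_ereal (g x) \<le> b"
  proof (intro allI impI)
    fix x assume "\<bar>g x\<bar> \<noteq> \<infinity>"
    then have "g x \<le> ereal (real_of_ereal (g x))" by (cases "g x") auto
    then show "x \<bullet> u - real_of_ereal (g x) \<le> b" by (rule epi_le)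
  qed
  have ex: "\<exists>x. \<bar>g x\<bar> \<noteq> \<infinity> \<and> x \<bullet> u - real_of_ereal (g x) = b"
    using Fpt[OF p0] p0 Fchar by metis
  have "F = {(x, real_of_ereal (g x)) | x. \<bar>g x\<bar> \<noteq> \<infinity> \<and> x \<bullet> u - real_of_ereal (g x) = b}"
  proof (intro set_eqI iffI)
    fix p assume "p \<in> F"
    then obtain y r where p: "p = (y, r)" "(y, r) \<in> F" by (cases p) auto
    then show "p \<in> {(x, real_of_ereal (g x)) | x. \<bar>g x\<bar> \<noteq> \<infinity> \<and> x \<bullet> u - real_of_ereal (g x) = b}"
      using Fpt[OF p(2)] Fchar[of y r] by auto
  next
    fix p assume "p \<in> {(x, real_of_ereal (g x)) | x. \<bar>g x\<bar> \<noteq> \<infinity> \<and> x \<bullet> u - real_of_ereal (g x) = b}"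
    then obtain x where p: "p = (x, real_of_ereal (g x))" "\<bar>g x\<bar> \<noteq> \<infinity>" "x \<bullet> u - real_of_ereal (g x) = b"
      by auto
    then show "p \<in> F" using Fchar by (cases "g x") auto
  qed
  note Fe = this
  show ?R
    apply (rule exI[of _ u])
    apply (rule exI[of _ b])
    using allle ex Fe by auto
next
  assume R: ?R
  then obtain u where "\<exists>b. (\<exists>x. \<bar>g x\<bar> \<noteq> \<infinity> \<and> x \<bullet> u - real_of_ereal (g x) = b) \<and>
     (\<forall>x. \<bar>g x\<bar> \<noteq> \<infinity> \<longrightarrow> x \<bullet> u - real_of_ereal (g x) \<le> b) \<and>
     F = {(x, real_of_ereal (g x)) | x. \<bar>g x\<bar> \<noteq> \<infinity> \<and> x \<bullet> u - real_of_ereal (g x) = b}" ..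
  then obtain b where "(\<exists>x. \<bar>g x\<bar> \<noteq> \<infinity> \<and> x \<bullet> u - real_of_ereal (g x) = b) \<and>
     (\<forall>x. \<bar>g x\<bar> \<noteq> \<infinity> \<longrightarrow> x \<bullet> u - real_of_ereal (g x) \<le> b) \<and>
     F = {(x, real_of_ereal (g x)) | x. \<bar>g x\<bar> \<noteq> \<infinity> \<and> x \<bullet> u - real_of_ereal (g x) = b}" ..
  then have ex: "\<exists>x. \<bar>g x\<bar> \<noteq> \<infinity> \<and> x \<bullet> u - real_of_ereal (g x) = b"
    and allle: "\<forall>x. \<bar>g x\<bar> \<noteq> \<infinity> \<longrightarrow> x \<bullet> u - real_of_ereal (g x) \<le> b"
    and Feq: "F = {(x, real_of_ereal (g x)) | x. \<bar>g x\<bar> \<noteq> \<infinity> \<and> x \<bullet> u - real_of_ereal (g x) = b}"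
    by (rule conjunct1, rule conjunct1[OF conjunct2], rule conjunct2[OF conjunct2])
  have le: "y \<bullet> u - r \<le> b \<and> (y \<bullet> u - r = b \<longrightarrow> r = real_of_ereal (g y) \<and> \<bar>g y\<bar> \<noteq> \<infinity>)"
    if "g y \<le> ereal r" for y r
  proof -
    have fin: "\<bar>g y\<bar> \<noteq> \<infinity>" using that nm[of y] by auto
    then have "real_of_ereal (g y) \<le> r" using that by (cases "g y") auto
    moreover have "y \<bullet> u - real_of_ereal (g y) \<le> b" using allle fin by auto
    ultimately show ?thesis using fin by auto
  qed
  have Feq2: "F = epi g \<inter> {p. (u, -1::real) \<bullet> p = b}"
  proof (intro set_eqI iffI)
    fix p assume "p \<in> F"
    then obtain x where p: "p = (x, real_of_ereal (g x))" "\<bar>g x\<bar> \<noteq> \<infinity>" "x \<bullet> u - real_of_ereal (g x) = b"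
      using Feq by auto
    then show "p \<in> epi g \<inter> {p. (u, -1::real) \<bullet> p = b}"
      unfolding epi_def by (cases "g x") (auto simp: inner_commute)
  next
    fix p assume p: "p \<in> epi g \<inter> {p. (u, -1::real) \<bullet> p = b}"
    obtain y r where pr: "p = (y, r)" by (cases p)
    with p have "g y \<le> ereal r" "y \<bullet> u - r = b" unfolding epi_def by (auto simp: inner_commute)
    with le[of y r] pr show "p \<in> F" using Feq by auto
  qed
  have sub: "epi g \<subseteq> {p. (u, -1::real) \<bullet> p \<le> b}"
    using le unfolding epi_def by (auto simp: inner_commute)
  have ne: "epi g \<inter> {p. (u, -1::real) \<bullet> p = b} \<noteq> {}"
    using ex Feq Feq2 by auto
  have exp: "exposed_face F (epi g)"
    unfolding exposed_face_def
    by (rule exI[of _ "(u, -1::real)"], rule exI[of _ b]) (use Feq2 sub ne in \<open>auto simp: zero_prod_def\<close>)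
  have "minimal_wrt Kvert (epi g) p" if "p \<in> F" for p
  proof -
    obtain x where p: "p = (x, real_of_ereal (g x))" "\<bar>g x\<bar> \<noteq> \<infinity>"
      using \<open>p \<in> F\<close> Feq by auto
    {
      fix k assume k: "k \<in> Kvert - uminus ` Kvert" "p - k \<in> epi g"
      obtain a s where kk: "k = (a, s)" by (cases k)
      with k(1) have a0: "a = 0" "s \<ge> 0" unfolding Kvert_def by auto
      have "s \<noteq> 0"
      proof
        assume "s = 0"
        then have "k = - (0, 0)" using kk a0 by simp
        moreover have "(0::'a, 0::real) \<in> Kvert" unfolding Kvert_def by simp
        ultimately show False using k(1) by blast
      qed
      with kk a0 have ks: "k = (0, s)" "s > 0" by auto
      with k p have "g x \<le> ereal (real_of_ereal (g x) - s)" unfolding epi_def by auto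
      with p(2) ks have False by (cases "g x") auto
    }
    then show ?thesis unfolding minimal_wrt_def by blast
  qed
  with exp show ?L unfolding minimal_face_def by blast
qed


lemma duality:
  fixes f :: "'a::euclidean_space \<Rightarrow> ereal"
  assumes pr: "proper_fun f" and cl: "closed_fun f" and cv: "convex_fun f"
    and u0: "conj_fun f u0 \<noteq> \<infinity>"
    and B: "\<And>v. ereal (x \<bullet> v) - conj_fun f v \<le> ereal B"
  shows "f x \<le> ereal B"
proof (rule ccontr)
  assume "\<not> f x \<le> ereal B"
  then have nin: "(x, B) \<notin> epi f" unfolding epi_def by auto
  obtain w c where wc: "w \<bullet> (x, B) < c" "\<forall>p\<in>epi f. w \<bullet> p > c"
    using separating_hyperplane_closed_point[OF _ _ nin] cl cv
    unfolding closed_fun_def convex_fun_def by blast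
  obtain a t where w: "w = (a, t)" by (cases w)
  have nm: "f y \<noteq> -\<infinity>" for y using pr unfolding proper_fun_def by auto
  obtain y0 where y0: "f y0 < \<infinity>" using pr unfolding proper_fun_def by auto
  then obtain r0 where r0: "f y0 = ereal r0" using nm[of y0] by (cases "f y0") auto
  have ep: "a \<bullet> y + t * r > c" if "f y \<le> ereal r" for y r
    using wc(2) that w unfolding epi_def by auto
  have xB: "a \<bullet> x + t * B < c" using wc(1) w by simp
  have t0: "t \<ge> 0"
  proof (rule ccontr)
    assume "\<not> t \<ge> 0"
    then have tl: "t < 0" by simp
    have g0: "a \<bullet> y0 + t * r0 > c" using ep[of y0 r0] r0 by simp
    define s where "s = (a \<bullet> y0 + t * r0 - c) / (-t)"
    have s0: "s \<ge> 0" using g0 tl unfolding s_def by (simp add: divide_nonneg_neg)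
    have "f y0 \<le> ereal (r0 + s)" using r0 s0 by simp
    then have "a \<bullet> y0 + t * (r0 + s) > c" by (rule ep)
    moreover have "t * s = - (a \<bullet> y0 + t * r0 - c)" using tl unfolding s_def by simp
    ultimately show False by (simp add: algebra_simps)
  qed
  obtain F0 where F0: "conj_fun f u0 = ereal F0"
    using u0 conj_nm[OF pr, of u0] by (cases "conj_fun f u0") auto
  show False
  proof (cases "t = 0")
    case False
    with t0 have tp: "t > 0" by simp
    define u where "u = (- 1 / t) *\<^sub>R a"
    have e: "y \<bullet> u - r = - (a \<bullet> y + t * r) / t" for y r
      using tp unfolding u_def by (simp add: field_simps inner_commute)
    have "conj_fun f u \<le> ereal (- c / t)"
    proof (rule conj_le)
      fix y show "ereal (y \<bullet> u) - f y \<le> ereal (- c / t)"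
      proof (cases "f y")
        case (real r)
        then have "a \<bullet> y + t * r > c" using ep[of y r] by simp
        then have "- (a \<bullet> y + t * r) < - c" by simp
        then have "- (a \<bullet> y + t * r) / t < - c / t" using tp by (rule divide_strict_right_mono)
        with e[of y r] real show ?thesis by simp
      qed (use nm in auto)
    qed
    then have "ereal (x \<bullet> u) - ereal (- c / t) \<le> ereal (x \<bullet> u) - conj_fun f u"
      by (rule ereal_minus_mono[OF order_refl])
    also have "\<dots> \<le> ereal B" by (rule B)
    finally have "x \<bullet> u - B \<le> - c / t" by simp
    moreover have "- (a \<bullet> x + t * B) / t > - c / t"
      using xB tp by (intro divide_strict_right_mono) auto
    ultimately show False using e[of x B] by simp
  next
    case True
    have ay: "a \<bullet> y > c" if "f y \<le> ereal r" for y r using ep[OF that] True by simp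
    have ax: "a \<bullet> x < c" using xB True by simp
    define L where "L = max 0 ((B - x \<bullet> u0 + F0 + 1) / (c - a \<bullet> x))"
    have L0: "L \<ge> 0" unfolding L_def by simp
    have LL: "L * (c - a \<bullet> x) \<ge> B - x \<bullet> u0 + F0 + 1"
    proof -
      have "(B - x \<bullet> u0 + F0 + 1) / (c - a \<bullet> x) \<le> L" unfolding L_def by simp
      then show ?thesis using ax by (simp add: pos_divide_le_eq mult.commute)
    qed
    define v where "v = u0 - L *\<^sub>R a"
    have "conj_fun f v \<le> ereal (F0 - L * c)"
    proof (rule conj_le)
      fix y show "ereal (y \<bullet> v) - f y \<le> ereal (F0 - L * c)"
      proof (cases "f y")
        case (real r)
        then have "a \<bullet> y > c" using ay[of y r] by simp
        then have "L * c \<le> L * (a \<bullet> y)" using L0 by (simp add: mult_left_mono)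
        moreover have "ereal (y \<bullet> u0) - f y \<le> ereal F0" using conj_ge[of y u0 f] F0 by simp
        ultimately show ?thesis using real unfolding v_def
          by (simp add: inner_diff_right inner_commute)
      qed (use nm in auto)
    qed
    then have "ereal (x \<bullet> v) - ereal (F0 - L * c) \<le> ereal (x \<bullet> v) - conj_fun f v"
      by (rule ereal_minus_mono[OF order_refl])
    also have "\<dots> \<le> ereal B" by (rule B)
    finally have "x \<bullet> v - (F0 - L * c) \<le> B" by simp
    then show False using LL unfolding v_def by (simp add: inner_diff_right algebra_simps inner_commute)
  qed
qed


lemma set_eq_help:
  assumes "\<And>x. P x \<longleftrightarrow> Q x"
  shows "{(x, h x) | x. P x} = {(x, h x) | x. Q x}"
  using assms by auto

theorem proposition3p2:
  fixes f :: "'a::euclidean_space \<Rightarrow> ereal"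
  assumes "proper_fun f" and "closed_fun f" and "convex_fun f"
  shows "(\<forall>F. F \<subseteq> epi f \<longrightarrow>
            ((exposed_face F (epi f) \<and> minimal_face Kvert (epi f) F) \<longleftrightarrow>
             (\<exists>ub \<in> edom (conj_fun f). subdiff (conj_fun f) ub \<noteq> {} \<and>
                F = {(x, real_of_ereal (f x)) | x. ub \<in> subdiff f x})))
       \<and> (\<forall>G. G \<subseteq> epi (conj_fun f) \<longrightarrow>
            ((exposed_face G (epi (conj_fun f)) \<and> minimal_face Kvert (epi (conj_fun f)) G) \<longleftrightarrow>
             (\<exists>xb \<in> edom f. subdiff f xb \<noteq> {} \<and>
                G = {(u, real_of_ereal (conj_fun f u)) | u. u \<in> subdiff f xb})))"
proof -
  note pr = assms(1)
  have nmf: "f x \<noteq> -\<infinity>" for x using pr unfolding proper_fun_def by auto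
  have nmc: "conj_fun f u \<noteq> -\<infinity>" for u by (rule conj_nm[OF pr])
  have cbound: "conj_fun f u \<le> ereal b"
    if "\<forall>x. \<bar>f x\<bar> \<noteq> \<infinity> \<longrightarrow> x \<bullet> u - real_of_ereal (f x) \<le> b" for u b
  proof (rule conj_le)
    fix y show "ereal (y \<bullet> u) - f y \<le> ereal b"
      using spec[OF that, of y] nmf[of y] by (cases "f y") auto
  qed
  have part1: "(exposed_face F (epi f) \<and> minimal_face Kvert (epi f) F) \<longleftrightarrow>
             (\<exists>ub \<in> edom (conj_fun f). subdiff (conj_fun f) ub \<noteq> {} \<and>
                F = {(x, real_of_ereal (f x)) | x. ub \<in> subdiff f x})"
    if Fs: "F \<subseteq> epi f" for F
  proof -
    have eq: "u \<in> subdiff f x \<longleftrightarrow> (\<bar>f x\<bar> \<noteq> \<infinity> \<and> x \<bullet> u - real_of_ereal (f x) = b)"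
      if "conj_fun f u = ereal b" for u b x
      using sub_char[of f u x, OF nmf] that by auto
    show ?thesis
      unfolding face_char[OF nmf Fs]
    proof
      assume "\<exists>u b. (\<exists>x. \<bar>f x\<bar> \<noteq> \<infinity> \<and> x \<bullet> u - real_of_ereal (f x) = b) \<and>
        (\<forall>x. \<bar>f x\<bar> \<noteq> \<infinity> \<longrightarrow> x \<bullet> u - real_of_ereal (f x) \<le> b) \<and>
        F = {(x, real_of_ereal (f x)) | x. \<bar>f x\<bar> \<noteq> \<infinity> \<and> x \<bullet> u - real_of_ereal (f x) = b}"
      then obtain u where "\<exists>b. (\<exists>x. \<bar>f x\<bar> \<noteq> \<infinity> \<and> x \<bullet> u - real_of_ereal (f x) = b) \<and>
        (\<forall>x. \<bar>f x\<bar> \<noteq> \<infinity> \<longrightarrow> x \<bullet> u - real_of_ereal (f x) \<le> b) \<and>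
        F = {(x, real_of_ereal (f x)) | x. \<bar>f x\<bar> \<noteq> \<infinity> \<and> x \<bullet> u - real_of_ereal (f x) = b}" ..
      then obtain b where "(\<exists>x. \<bar>f x\<bar> \<noteq> \<infinity> \<and> x \<bullet> u - real_of_ereal (f x) = b) \<and>
        (\<forall>x. \<bar>f x\<bar> \<noteq> \<infinity> \<longrightarrow> x \<bullet> u - real_of_ereal (f x) \<le> b) \<and>
        F = {(x, real_of_ereal (f x)) | x. \<bar>f x\<bar> \<noteq> \<infinity> \<and> x \<bullet> u - real_of_ereal (f x) = b}" ..
      then have ex: "\<exists>x. \<bar>f x\<bar> \<noteq> \<infinity> \<and> x \<bullet> u - real_of_ereal (f x) = b"
        and allle: "\<forall>x. \<bar>f x\<bar> \<noteq> \<infinity> \<longrightarrow> x \<bullet> u - real_of_ereal (f x) \<le> b"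
        and Feq: "F = {(x, real_of_ereal (f x)) | x. \<bar>f x\<bar> \<noteq> \<infinity> \<and> x \<bullet> u - real_of_ereal (f x) = b}"
        by (rule conjunct1, rule conjunct1[OF conjunct2], rule conjunct2[OF conjunct2])
      obtain x0 where "\<bar>f x0\<bar> \<noteq> \<infinity> \<and> x0 \<bullet> u - real_of_ereal (f x0) = b" using ex ..
      then have x0: "\<bar>f x0\<bar> \<noteq> \<infinity>" "x0 \<bullet> u - real_of_ereal (f x0) = b" by auto
      have cu: "conj_fun f u = ereal b"
      proof (rule antisym)
        show "conj_fun f u \<le> ereal b" using cbound allle by blast
        show "ereal b \<le> conj_fun f u" using conj_ge[of x0 u f] x0 by (cases "f x0") auto
      qed
      have "x0 \<in> subdiff (conj_fun f) u"
        unfolding subdiff_def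
      proof (intro CollectI conjI allI)
        show "\<bar>conj_fun f u\<bar> \<noteq> \<infinity>" using cu by simp
        fix v
        have "ereal (x0 \<bullet> v) - f x0 \<le> conj_fun f v" by (rule conj_ge)
        then show "conj_fun f u + ereal ((v - u) \<bullet> x0) \<le> conj_fun f v"
          using cu x0 by (cases "f x0") (auto simp: inner_diff_left inner_diff_right inner_commute)
      qed
      moreover have "u \<in> edom (conj_fun f)" using cu unfolding edom_def by simp
      moreover have "F = {(x, real_of_ereal (f x)) | x. u \<in> subdiff f x}"
        unfolding Feq by (rule set_eq_help) (simp add: eq[OF cu])
      ultimately show "\<exists>ub \<in> edom (conj_fun f). subdiff (conj_fun f) ub \<noteq> {} \<and>
                F = {(x, real_of_ereal (f x)) | x. ub \<in> subdiff f x}" by blast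
    next
      assume "\<exists>ub \<in> edom (conj_fun f). subdiff (conj_fun f) ub \<noteq> {} \<and>
                F = {(x, real_of_ereal (f x)) | x. ub \<in> subdiff f x}"
      then obtain u x0 where x0: "x0 \<in> subdiff (conj_fun f) u"
        and Feq: "F = {(x, real_of_ereal (f x)) | x. u \<in> subdiff f x}" by blast
      then have fin: "\<bar>conj_fun f u\<bar> \<noteq> \<infinity>" and hyp: "\<And>v. conj_fun f u + ereal ((v - u) \<bullet> x0) \<le> conj_fun f v"
        unfolding subdiff_def by auto
      obtain b where cu: "conj_fun f u = ereal b" using fin by (cases "conj_fun f u") auto
      have "f x0 \<le> ereal (x0 \<bullet> u - b)"
      proof (rule duality[OF assms, of u])
        show "conj_fun f u \<noteq> \<infinity>" using cu by simp
        fix v show "ereal (x0 \<bullet> v) - conj_fun f v \<le> ereal (x0 \<bullet> u - b)"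
          using hyp[of v] cu nmc[of v]
          by (cases "conj_fun f v") (auto simp: inner_diff_left inner_diff_right inner_commute)
      qed
      moreover have "ereal (x0 \<bullet> u) - f x0 \<le> ereal b" using conj_ge[of x0 u f] cu by simp
      ultimately have fx0: "\<bar>f x0\<bar> \<noteq> \<infinity>" "x0 \<bullet> u - real_of_ereal (f x0) = b"
        using nmf[of x0] by (cases "f x0"; auto)+
      have allle: "\<forall>x. \<bar>f x\<bar> \<noteq> \<infinity> \<longrightarrow> x \<bullet> u - real_of_ereal (f x) \<le> b"
      proof (intro allI impI)
        fix x assume "\<bar>f x\<bar> \<noteq> \<infinity>"
        then show "x \<bullet> u - real_of_ereal (f x) \<le> b"
          using conj_ge[of x u f] cu by (cases "f x") auto
      qed
      have "F = {(x, real_of_ereal (f x)) | x. \<bar>f x\<bar> \<noteq> \<infinity> \<and> x \<bullet> u - real_of_ereal (f x) = b}"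
        unfolding Feq by (rule set_eq_help) (simp add: eq[OF cu])
      note Fe = this
      show "\<exists>u b. (\<exists>x. \<bar>f x\<bar> \<noteq> \<infinity> \<and> x \<bullet> u - real_of_ereal (f x) = b) \<and>
        (\<forall>x. \<bar>f x\<bar> \<noteq> \<infinity> \<longrightarrow> x \<bullet> u - real_of_ereal (f x) \<le> b) \<and>
        F = {(x, real_of_ereal (f x)) | x. \<bar>f x\<bar> \<noteq> \<infinity> \<and> x \<bullet> u - real_of_ereal (f x) = b}"
        apply (rule exI[of _ u], rule exI[of _ b], intro conjI)
          apply (rule exI[of _ x0]) using fx0 apply simp
         using allle apply simp
        using Fe apply assumption
        done
    qed
  qed
  have part2: "(exposed_face G (epi (conj_fun f)) \<and> minimal_face Kvert (epi (conj_fun f)) G) \<longleftrightarrow>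
             (\<exists>xb \<in> edom f. subdiff f xb \<noteq> {} \<and>
                G = {(u, real_of_ereal (conj_fun f u)) | u. u \<in> subdiff f xb})"
    if Gs: "G \<subseteq> epi (conj_fun f)" for G
  proof -
    have eq: "u \<in> subdiff f x \<longleftrightarrow> (\<bar>conj_fun f u\<bar> \<noteq> \<infinity> \<and> x \<bullet> u - real_of_ereal (conj_fun f u) = b)"
      if "f x = ereal b" for u b x
      using sub_char[of f u x, OF nmf] that nmc[of u] by (cases "conj_fun f u") auto
    show ?thesis
      unfolding face_char[OF nmc Gs]
    proof
      assume "\<exists>x b. (\<exists>u. \<bar>conj_fun f u\<bar> \<noteq> \<infinity> \<and> u \<bullet> x - real_of_ereal (conj_fun f u) = b) \<and>
        (\<forall>u. \<bar>conj_fun f u\<bar> \<noteq> \<infinity> \<longrightarrow> u \<bullet> x - real_of_ereal (conj_fun f u) \<le> b) \<and>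
        G = {(u, real_of_ereal (conj_fun f u)) | u. \<bar>conj_fun f u\<bar> \<noteq> \<infinity> \<and> u \<bullet> x - real_of_ereal (conj_fun f u) = b}"
      then obtain x where "\<exists>b. (\<exists>u. \<bar>conj_fun f u\<bar> \<noteq> \<infinity> \<and> u \<bullet> x - real_of_ereal (conj_fun f u) = b) \<and>
        (\<forall>u. \<bar>conj_fun f u\<bar> \<noteq> \<infinity> \<longrightarrow> u \<bullet> x - real_of_ereal (conj_fun f u) \<le> b) \<and>
        G = {(u, real_of_ereal (conj_fun f u)) | u. \<bar>conj_fun f u\<bar> \<noteq> \<infinity> \<and> u \<bullet> x - real_of_ereal (conj_fun f u) = b}" ..
      then obtain b where "(\<exists>u. \<bar>conj_fun f u\<bar> \<noteq> \<infinity> \<and> u \<bullet> x - real_of_ereal (conj_fun f u) = b) \<and>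
        (\<forall>u. \<bar>conj_fun f u\<bar> \<noteq> \<infinity> \<longrightarrow> u \<bullet> x - real_of_ereal (conj_fun f u) \<le> b) \<and>
        G = {(u, real_of_ereal (conj_fun f u)) | u. \<bar>conj_fun f u\<bar> \<noteq> \<infinity> \<and> u \<bullet> x - real_of_ereal (conj_fun f u) = b}" ..
      then have ex: "\<exists>u. \<bar>conj_fun f u\<bar> \<noteq> \<infinity> \<and> u \<bullet> x - real_of_ereal (conj_fun f u) = b"
        and allle: "\<forall>u. \<bar>conj_fun f u\<bar> \<noteq> \<infinity> \<longrightarrow> u \<bullet> x - real_of_ereal (conj_fun f u) \<le> b"
        and Geq: "G = {(u, real_of_ereal (conj_fun f u)) | u. \<bar>conj_fun f u\<bar> \<noteq> \<infinity> \<and> u \<bullet> x - real_of_ereal (conj_fun f u) = b}"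
        by (rule conjunct1, rule conjunct1[OF conjunct2], rule conjunct2[OF conjunct2])
      obtain u0 where "\<bar>conj_fun f u0\<bar> \<noteq> \<infinity> \<and> u0 \<bullet> x - real_of_ereal (conj_fun f u0) = b"
        using ex ..
      then have u0: "\<bar>conj_fun f u0\<bar> \<noteq> \<infinity>" "u0 \<bullet> x - real_of_ereal (conj_fun f u0) = b" by auto
      have "f x \<le> ereal b"
      proof (rule duality[OF assms, of u0])
        show "conj_fun f u0 \<noteq> \<infinity>" using u0 by auto
        fix v show "ereal (x \<bullet> v) - conj_fun f v \<le> ereal b"
          using spec[OF allle, of v] nmc[of v] by (cases "conj_fun f v") (auto simp: inner_commute)
      qed
      moreover have "ereal (x \<bullet> u0) - f x \<le> conj_fun f u0" by (rule conj_ge)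
      ultimately have fx: "f x = ereal b"
        using u0 nmf[of x] by (cases "f x"; cases "conj_fun f u0") (auto simp: inner_commute)
      have "x \<in> edom f" using fx unfolding edom_def by simp
      moreover have "u0 \<in> subdiff f x" using eq[OF fx] u0 by (simp add: inner_commute)
      moreover have "G = {(u, real_of_ereal (conj_fun f u)) | u. u \<in> subdiff f x}"
        unfolding Geq by (rule set_eq_help) (simp add: eq[OF fx] inner_commute)
      ultimately show "\<exists>xb \<in> edom f. subdiff f xb \<noteq> {} \<and>
                G = {(u, real_of_ereal (conj_fun f u)) | u. u \<in> subdiff f xb}" by blast
    next
      assume "\<exists>xb \<in> edom f. subdiff f xb \<noteq> {} \<and>
                G = {(u, real_of_ereal (conj_fun f u)) | u. u \<in> subdiff f xb}"
      then obtain x u0 where u0: "u0 \<in> subdiff f x"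
        and Geq: "G = {(u, real_of_ereal (conj_fun f u)) | u. u \<in> subdiff f x}" by blast
      then have "\<bar>f x\<bar> \<noteq> \<infinity>" unfolding subdiff_def by auto
      then obtain b where fx: "f x = ereal b" by (cases "f x") auto
      have ex: "\<bar>conj_fun f u0\<bar> \<noteq> \<infinity> \<and> u0 \<bullet> x - real_of_ereal (conj_fun f u0) = b"
        using eq[OF fx] u0 by (simp add: inner_commute)
      have allle: "\<forall>u. \<bar>conj_fun f u\<bar> \<noteq> \<infinity> \<longrightarrow> u \<bullet> x - real_of_ereal (conj_fun f u) \<le> b"
      proof (intro allI impI)
        fix u assume "\<bar>conj_fun f u\<bar> \<noteq> \<infinity>"
        then show "u \<bullet> x - real_of_ereal (conj_fun f u) \<le> b"
          using conj_ge[of x u f] fx by (cases "conj_fun f u") (auto simp: inner_commute)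
      qed
      have "G = {(u, real_of_ereal (conj_fun f u)) | u. \<bar>conj_fun f u\<bar> \<noteq> \<infinity> \<and> u \<bullet> x - real_of_ereal (conj_fun f u) = b}"
        unfolding Geq by (rule set_eq_help) (simp add: eq[OF fx] inner_commute)
      note Fe = this
      show "\<exists>x b. (\<exists>u. \<bar>conj_fun f u\<bar> \<noteq> \<infinity> \<and> u \<bullet> x - real_of_ereal (conj_fun f u) = b) \<and>
        (\<forall>u. \<bar>conj_fun f u\<bar> \<noteq> \<infinity> \<longrightarrow> u \<bullet> x - real_of_ereal (conj_fun f u) \<le> b) \<and>
        G = {(u, real_of_ereal (conj_fun f u)) | u. \<bar>conj_fun f u\<bar> \<noteq> \<infinity> \<and> u \<bullet> x - real_of_ereal (conj_fun f u) = b}"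
        apply (rule exI[of _ x], rule exI[of _ b], intro conjI)
          apply (rule exI[of _ u0]) using ex apply simp
         using allle apply simp
        using Fe apply assumption
        done
    qed
  qed
  show ?thesis using part1 part2 by blast
qed


end
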